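(* No matching algorithm for school choice with feature-based uncertain preferences satisfies incentive compatibility with adventurism (IC-A) unless it always outputs the same result.
   Context: An instance consists of: a set $N$ of students; a set $M$ of $m$ colleges, each college $c$ with positive integer capacity $x_c$ and strict preference $\succ_c$ over $N$; a finite set $F$ of features; for each student $s$ and feature $f$ a utility function $u_s^f:M\to[0,1]$; for each student $s$ a probability distribution $\mu_s$ over weight vectors $w_s=(w_s^f)_{f\in F}$ with $w_s^f\ge0$, $\sum_f w_s^f=1$, independent across students. For realized $w_s$, $c\succ_s^{w_s}c'$ iff $\sum_f w_s^fu_s^f(c)>\sum_f w_s^fu_s^f(c')$; being unmatched ($\mathsf{null}$) is ranked below any college. A matching algorithm maps each instance to a matching (each student gets at most one college, each college $c$ at most $x_c$ students). Each student $s$ privately knows $(u_s,\mu_s)=(\{u_s^f\}_{f\in F},\mu_s)$ and may report any $(u_s',\mu_s')$. Let $\pi(s)$ be the college assigned to $s$ when she reports truthfully and $\pi'(s)$ the one assigned under a misreport (everything else fixed). The algorithm is IC-A if for every instance, student $s$, and misreport, $\Pr[\pi'(s)\succ_s^{w_s}\pi(s)]>0$ never occurs, where the probability is over $s$'s true weights $w_s\sim\mu_s$ and uses her true utilities. *)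

theory Defs
  imports "HOL-Probability.Probability"
begin

text \<open>Student s's report consists of utilities (util I s f c = u_s^f(c)) and a
  probability distribution (wdist I s) over weight vectors w : 'f => real,
  living on the product sigma-algebra of borel over F.\<close>

record ('s, 'c, 'f) sinst =
  students :: "'s set"
  colleges :: "'c set"
  cap :: "'c \<Rightarrow> nat"
  cpref :: "'c \<Rightarrow> 's rel"          \<comment> \<open>(a,b) \<in> cpref c  means  a \<succ>_c b\<close>
  util :: "'s \<Rightarrow> 'f \<Rightarrow> 'c \<Rightarrow> real"
  wdist :: "'s \<Rightarrow> ('f \<Rightarrow> real) measure"

definition weight_space :: "'f set \<Rightarrow> ('f \<Rightarrow> real) measure" where
  "weight_space F = (\<Pi>\<^sub>M f\<in>F. (borel :: real measure))"

definition is_weight :: "'f set \<Rightarrow> ('f \<Rightarrow> real) \<Rightarrow> bool" where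
  "is_weight F w \<longleftrightarrow> (\<forall>f\<in>F. w f \<ge> 0) \<and> (\<Sum>f\<in>F. w f) = 1"

definition valid_wdist :: "'f set \<Rightarrow> ('f \<Rightarrow> real) measure \<Rightarrow> bool" where
  "valid_wdist F \<mu> \<longleftrightarrow> prob_space \<mu> \<and> sets \<mu> = sets (weight_space F)
     \<and> (AE w in \<mu>. is_weight F w)"

definition valid_report :: "'f set \<Rightarrow> 'c set \<Rightarrow> ('f \<Rightarrow> 'c \<Rightarrow> real)
     \<Rightarrow> ('f \<Rightarrow> real) measure \<Rightarrow> bool" where
  "valid_report F M u \<mu> \<longleftrightarrow> (\<forall>f\<in>F. \<forall>c\<in>M. 0 \<le> u f c \<and> u f c \<le> 1) \<and> valid_wdist F \<mu>"

definition valid_instance :: "'f set \<Rightarrow> ('s, 'c, 'f) sinst \<Rightarrow> bool" where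
  "valid_instance F I \<longleftrightarrow>
     finite (students I) \<and> finite (colleges I) \<and>
     (\<forall>c\<in>colleges I. cap I c > 0) \<and>
     (\<forall>c\<in>colleges I. cpref I c \<subseteq> students I \<times> students I
                       \<and> strict_linear_order_on (students I) (cpref I c)) \<and>
     (\<forall>s\<in>students I. valid_report F (colleges I) (util I s) (wdist I s))"

type_synonym ('s, 'c) matching = "'s \<Rightarrow> 'c option"

definition is_matching :: "('s, 'c, 'f) sinst \<Rightarrow> ('s, 'c) matching \<Rightarrow> bool" where
  "is_matching I \<pi> \<longleftrightarrow>
     (\<forall>s c. \<pi> s = Some c \<longrightarrow> s \<in> students I \<and> c \<in> colleges I) \<and>
     (\<forall>c\<in>colleges I. card {s \<in> students I. \<pi> s = Some c} \<le> cap I c)"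

definition matching_algorithm :: "'f set \<Rightarrow> (('s, 'c, 'f) sinst \<Rightarrow> ('s, 'c) matching) \<Rightarrow> bool" where
  "matching_algorithm F A \<longleftrightarrow> (\<forall>I. valid_instance F I \<longrightarrow> is_matching I (A I))"

definition wutil :: "'f set \<Rightarrow> ('f \<Rightarrow> 'c \<Rightarrow> real) \<Rightarrow> ('f \<Rightarrow> real) \<Rightarrow> 'c \<Rightarrow> real" where
  "wutil F u w c = (\<Sum>f\<in>F. w f * u f c)"

definition strictly_prefers :: "'f set \<Rightarrow> ('f \<Rightarrow> 'c \<Rightarrow> real) \<Rightarrow> ('f \<Rightarrow> real)
     \<Rightarrow> 'c option \<Rightarrow> 'c option \<Rightarrow> bool" where
  "strictly_prefers F u w x y =
     (case x of
        None \<Rightarrow> False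
      | Some c \<Rightarrow> (case y of None \<Rightarrow> True | Some c' \<Rightarrow> wutil F u w c > wutil F u w c'))"

definition misreport :: "('s, 'c, 'f) sinst \<Rightarrow> 's \<Rightarrow> ('f \<Rightarrow> 'c \<Rightarrow> real)
     \<Rightarrow> ('f \<Rightarrow> real) measure \<Rightarrow> ('s, 'c, 'f) sinst" where
  "misreport I s u' \<mu>' = I\<lparr>util := (util I)(s := u'), wdist := (wdist I)(s := \<mu>')\<rparr>"

definition IC_A :: "'f set \<Rightarrow> (('s, 'c, 'f) sinst \<Rightarrow> ('s, 'c) matching) \<Rightarrow> bool" where
  "IC_A F A \<longleftrightarrow>
     (\<forall>I. valid_instance F I \<longrightarrow>
       (\<forall>s\<in>students I. \<forall>u' \<mu>'. valid_report F (colleges I) u' \<mu>' \<longrightarrow>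
          \<not> (measure (wdist I s)
                {w \<in> space (wdist I s).
                   strictly_prefers F (util I s) w (A (misreport I s u' \<mu>') s) (A I s)} > 0)))"

end

theory Submission
  imports Defs
begin

definition mix :: "'f set \<Rightarrow> ('f \<Rightarrow> real) \<Rightarrow> ('f \<Rightarrow> real) \<Rightarrow> ('f \<Rightarrow> real) measure" where
  "mix F e1 e2 = distr (measure_pmf (bernoulli_pmf (1/2))) (weight_space F) (\<lambda>b. if b then e1 else e2)"

lemma sp_meas: "{w \<in> space (weight_space F). strictly_prefers F u w x y} \<in> sets (weight_space F)"
proof (cases x)
  case None then show ?thesis by (simp add: strictly_prefers_def)
next
  case (Some c) note xc = this
  show ?thesis
  proof (cases y)
    case None then show ?thesis using xc by (simp add: strictly_prefers_def)
  next
    case (Some d)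
    have "{w \<in> space (weight_space F). strictly_prefers F u w x y} =
      {w \<in> space (weight_space F). (\<Sum>f\<in>F. w f * u f c) > (\<Sum>f\<in>F. w f * u f d)}"
      using xc Some by (simp add: strictly_prefers_def wutil_def)
    also have "\<dots> \<in> sets (weight_space F)" unfolding weight_space_def by measurable
    finally show ?thesis .
  qed
qed

lemma iw_meas: "finite F \<Longrightarrow> {w \<in> space (weight_space F). is_weight F w} \<in> sets (weight_space F)"
  unfolding is_weight_def weight_space_def by measurable

lemma mix_valid:
  assumes "e1 \<in> space (weight_space F)" "e2 \<in> space (weight_space F)" "is_weight F e1" "is_weight F e2" "finite F"
  shows "valid_wdist F (mix F e1 e2)"
proof -
  have m: "(\<lambda>b. if b then e1 else e2) \<in> measurable (measure_pmf (bernoulli_pmf (1/2))) (weight_space F)"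
    using assms by auto
  have "prob_space (mix F e1 e2)" unfolding mix_def
    by (rule measure_pmf.prob_space_distr[OF m])
  moreover have "AE w in mix F e1 e2. is_weight F w"
    unfolding mix_def
    by (subst AE_distr_iff[OF m iw_meas[OF assms(5)]]) (simp add: assms)
  ultimately show ?thesis unfolding valid_wdist_def mix_def by simp
qed

lemma mix_ge:
  assumes "e1 \<in> space (weight_space F)" "e2 \<in> space (weight_space F)" "S \<in> sets (weight_space F)"
    "e1 \<in> S \<or> e2 \<in> S"
  shows "measure (mix F e1 e2) S \<ge> 1/2"
proof -
  have m: "(\<lambda>b. if b then e1 else e2) \<in> measurable (measure_pmf (bernoulli_pmf (1/2))) (weight_space F)"
    using assms by auto
  have eq: "measure (mix F e1 e2) S = measure_pmf.prob (bernoulli_pmf (1/2)) ((\<lambda>b. if b then e1 else e2) -` S)"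
    unfolding mix_def by (subst measure_distr[OF m assms(3)]) simp
  obtain b where b: "b \<in> (\<lambda>b. if b then e1 else e2) -` S" using assms(4) by (metis vimageI2)
  have "measure_pmf.prob (bernoulli_pmf (1/2)) {b} \<le> measure_pmf.prob (bernoulli_pmf (1/2)) ((\<lambda>b. if b then e1 else e2) -` S)"
    using b by (intro measure_pmf.finite_measure_mono) auto
  moreover have "measure_pmf.prob (bernoulli_pmf (1/2)) {b} = 1/2"
    by (simp add: measure_pmf_single)
  ultimately show ?thesis using eq by simp
qed

lemma misreport_simps[simp]:
  "students (misreport I s u \<mu>) = students I"
  "colleges (misreport I s u \<mu>) = colleges I"
  "cap (misreport I s u \<mu>) = cap I"
  "cpref (misreport I s u \<mu>) = cpref I"
  "util (misreport I s u \<mu>) = (util I)(s := u)"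
  "wdist (misreport I s u \<mu>) = (wdist I)(s := \<mu>)"
  "misreport (misreport I s u \<mu>) s u2 \<mu>2 = misreport I s u2 \<mu>2"
  by (simp_all add: misreport_def)

lemma misreport_self: "misreport I s (util I s) (wdist I s) = I"
  by (simp add: misreport_def)

lemma misreport_valid:
  assumes "valid_instance F I" "valid_report F (colleges I) u \<mu>"
  shows "valid_instance F (misreport I s u \<mu>)"
  using assms unfolding valid_instance_def by auto

lemma key:
  assumes "IC_A F A" "valid_instance F I" "s \<in> students I"
    "valid_report F (colleges I) u1 \<mu>1" "valid_report F (colleges I) u2 \<mu>2"
  shows "\<not> measure \<mu>1 {w \<in> space \<mu>1. strictly_prefers F u1 w (A (misreport I s u2 \<mu>2) s) (A (misreport I s u1 \<mu>1) s)} > 0"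
proof -
  have v: "valid_instance F (misreport I s u1 \<mu>1)" by (rule misreport_valid[OF assms(2) assms(4)])
  have H: "\<And>s' u' \<mu>'. s' \<in> students (misreport I s u1 \<mu>1) \<Longrightarrow> valid_report F (colleges (misreport I s u1 \<mu>1)) u' \<mu>' \<Longrightarrow>
          \<not> (measure (wdist (misreport I s u1 \<mu>1) s')
                {w \<in> space (wdist (misreport I s u1 \<mu>1) s').
                   strictly_prefers F (util (misreport I s u1 \<mu>1) s') w (A (misreport (misreport I s u1 \<mu>1) s' u' \<mu>') s') (A (misreport I s u1 \<mu>1) s')} > 0)"
    using assms(1) v unfolding IC_A_def by blast
  have "\<not> (measure (wdist (misreport I s u1 \<mu>1) s)
                {w \<in> space (wdist (misreport I s u1 \<mu>1) s).
                   strictly_prefers F (util (misreport I s u1 \<mu>1) s) w (A (misreport (misreport I s u1 \<mu>1) s u2 \<mu>2) s) (A (misreport I s u1 \<mu>1) s)} > 0)"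
    by (rule H[of s u2 \<mu>2]) (simp_all only: misreport_simps assms(3,5))
  then show ?thesis by simp
qed

lemma const:
  assumes fin: "finite F" and cF: "card F \<ge> 2" and ic: "IC_A F A" and vI: "valid_instance F I"
    and sI: "s \<in> students I"
    and r1: "valid_report F (colleges I) u1 \<mu>1" and r2: "valid_report F (colleges I) u2 \<mu>2"
  shows "A (misreport I s u1 \<mu>1) s = A (misreport I s u2 \<mu>2) s"
proof -
  have none: "A (misreport I s ua \<mu>a) s \<noteq> None"
    if ra: "valid_report F (colleges I) ua \<mu>a" and rb: "valid_report F (colleges I) ub \<mu>b"
      and sb: "A (misreport I s ub \<mu>b) s = Some d" for ua \<mu>a ub \<mu>b d
  proof
    assume na: "A (misreport I s ua \<mu>a) s = None"
    have "prob_space \<mu>a" using ra by (simp add: valid_report_def valid_wdist_def)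
    then have "measure \<mu>a (space \<mu>a) = 1" by (simp add: prob_space.prob_space)
    moreover have "{w \<in> space \<mu>a. strictly_prefers F ua w (A (misreport I s ub \<mu>b) s) (A (misreport I s ua \<mu>a) s)} = space \<mu>a"
      using na sb by (auto simp: strictly_prefers_def)
    ultimately show False using key[OF ic vI sI ra rb] by simp
  qed
  show ?thesis
  proof (cases "A (misreport I s u1 \<mu>1) s")
    case None
    then show ?thesis using none[OF r1 r2] by (cases "A (misreport I s u2 \<mu>2) s") auto
  next
    case (Some c)
    then obtain d where d: "A (misreport I s u2 \<mu>2) s = Some d" using none[OF r2 r1] by blast
    have "c = d"
    proof (rule ccontr)
      assume cd: "c \<noteq> d"
      obtain f1 f2 where f: "f1 \<in> F" "f2 \<in> F" "f1 \<noteq> f2"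
        using cF fin by (metis card_le_Suc0_iff_eq not_less_eq_eq numeral_2_eq_2)
      define e1 where "e1 = restrict (\<lambda>f. if f = f1 then 1 else 0::real) F"
      define e2 where "e2 = restrict (\<lambda>f. if f = f2 then 1 else 0::real) F"
      define us where "us = (\<lambda>f x. if f = f1 then (if x = c then 1 else 0) else if f = f2 then (if x = d then 1 else 0) else (0::real))"
      define ms where "ms = mix F e1 e2"
      have e1s: "e1 \<in> space (weight_space F)" and e2s: "e2 \<in> space (weight_space F)"
        by (auto simp: e1_def e2_def weight_space_def space_PiM)
      have iw1: "is_weight F e1" and iw2: "is_weight F e2"
        using f fin by (auto simp: is_weight_def e1_def e2_def)
      have w1: "wutil F us e1 x = (if x = c then 1 else 0)" for x
      proof -
        have "wutil F us e1 x = (\<Sum>f\<in>F. if f = f1 then us f1 x else 0)"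
          unfolding wutil_def e1_def by (rule sum.cong) auto
        then show ?thesis using f fin by (simp add: us_def)
      qed
      have w2: "wutil F us e2 x = (if x = d then 1 else 0)" for x
      proof -
        have "wutil F us e2 x = (\<Sum>f\<in>F. if f = f2 then us f2 x else 0)"
          unfolding wutil_def e2_def by (rule sum.cong) auto
        then show ?thesis using f fin by (simp add: us_def)
      qed
      have rs: "valid_report F (colleges I) us ms"
        using mix_valid[OF e1s e2s iw1 iw2 fin] by (auto simp: valid_report_def ms_def us_def)
      have spms: "space ms = space (weight_space F)" by (simp add: ms_def mix_def)
      define gs where "gs = A (misreport I s us ms) s"
      have gen: "gs = Some x"
        if rx: "valid_report F (colleges I) ux \<mu>x" and gx: "A (misreport I s ux \<mu>x) s = Some x"
          and ee: "e \<in> {e1, e2}" and wx: "\<And>y. wutil F us e y = (if y = x then 1 else 0)" for ux \<mu>x x e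
      proof (rule ccontr)
        assume ne: "gs \<noteq> Some x"
        let ?S = "{w \<in> space ms. strictly_prefers F us w (Some x) gs}"
        have "e \<in> ?S" using ee e1s e2s spms ne wx
          by (cases gs) (auto simp: strictly_prefers_def)
        moreover have "?S \<in> sets (weight_space F)" using sp_meas spms by metis
        ultimately have "measure ms ?S \<ge> 1/2" unfolding ms_def
          using mix_ge[OF e1s e2s] ee by (auto simp: ms_def)
        then show False using key[OF ic vI sI rs rx] gx gs_def by simp
      qed
      have "gs = Some c" using gen[OF r1 Some _ w1] by simp
      moreover have "gs = Some d" using gen[OF r2 d _ w2] by simp
      ultimately show False using cd by simp
    qed
    then show ?thesis using Some d by simp
  qed
qed

theorem proposition2:
  fixes F :: "'f set"
    and A :: "('s, 'c, 'f) sinst \<Rightarrow> ('s, 'c) matching"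
  assumes "finite F" and "card F \<ge> 2"
    and "matching_algorithm F A"
    and "IC_A F A"
  shows "\<forall>I. valid_instance F I \<longrightarrow>
           (\<forall>s\<in>students I. \<forall>u' \<mu>'. valid_report F (colleges I) u' \<mu>' \<longrightarrow>
              A (misreport I s u' \<mu>') s = A I s)"
proof (intro allI impI ballI)
  fix I :: "('s, 'c, 'f) sinst" and s u' \<mu>'
  assume vI: "valid_instance F I" and sI: "s \<in> students I" and r: "valid_report F (colleges I) u' \<mu>'"
  have r0: "valid_report F (colleges I) (util I s) (wdist I s)" using vI sI by (simp add: valid_instance_def)
  have "A (misreport I s u' \<mu>') s = A (misreport I s (util I s) (wdist I s)) s"
    by (rule const[OF assms(1,2,4) vI sI r r0])
  then show "A (misreport I s u' \<mu>') s = A I s" by (simp add: misreport_self)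
qed

end
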